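(* Let $G$ be a finite group. For each conjugacy class $[H]\in\overline{P}(G)$ and each $\sigma=(\delta_\sigma,\theta_\sigma)\in\Sigma_{[H]}$ let $\bigl(b_n^{[H]_\sigma}\bigr)_{n=1}^\infty$ be a sequence of non-negative integers, such that $b_1^{[G]_{(1,1)}}\geqslant1$. Define \[ a_n^{[H]_\sigma}=\begin{cases}\theta_\sigma\, b^{[H]_\sigma}_{n/\delta_\sigma}, & \text{if }\delta_\sigma\mid n,\\ 0,&\text{otherwise},\end{cases} \qquad a_n=\sum_{[H]\in\overline{P}(G)}\sum_{\sigma\in\Sigma_{[H]}}a_n^{[H]_\sigma},\qquad b_n=\sum_{[H]\in\overline{P}(G)}\sum_{\sigma\in\Sigma_{[H]}}b_n^{[H]_\sigma}, \] for all $n\geqslant1$. Then there exist a compact metric space $X$, a homeomorphism $T:X\to X$, and a continuous action of $G$ on $X$ commuting with $T$ such that $O_n(T)=a_n$ and $O_n(T')=b_n$ for all $n\geqslant1$, where $(X',T')$ is the quotient system of $(X,T)$ under $G$.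
   Context: $\overline{P}(G)$ is the set of conjugacy classes $[H]=\{gHg^{-1}:g\in G\}$ of subgroups $H\leqslant G$. $N_G(H)=\{g\in G:gHg^{-1}=H\}$. For a finite group $K$, $\Delta(K)=\{|\langle h\rangle|:h\in K\}$. For $[H]\in\overline{P}(G)$ (with a representative $H$), $\Sigma_{[H]}=\{(\delta,\theta):\delta\in\Delta(N_G(H)/H),\ \theta=[G:H]/\delta\}$; in particular $\Sigma_{[G]}=\{(1,1)\}$. The quotient system: $X'=G\backslash X=\{\mathfrak{O}_G(x):x\in X\}$, $\mathfrak{O}_G(x)=\{g(x):g\in G\}$, with metric $d'(\mathfrak{O}_G(x),\mathfrak{O}_G(y))=\min\{d(x',y'):x'\in\mathfrak{O}_G(x),y'\in\mathfrak{O}_G(y)\}$ and $T'(\mathfrak{O}_G(x))=\mathfrak{O}_G(T(x))$. For a map $S$, $O_n(S)$ is the number of closed orbits $\{x,S(x),\dots,S^{n-1}(x)\}$ of cardinality exactly $n$. *)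

theory Defs
  imports "HOL-Analysis.Analysis" "HOL-Algebra.Group_Action" "HOL-Algebra.Multiplicative_Group"
begin

definition subgroup_conj_class :: "('g, 'b) monoid_scheme \<Rightarrow> 'g set \<Rightarrow> 'g set set" where
  "subgroup_conj_class G H = {g <#\<^bsub>G\<^esub> H #>\<^bsub>G\<^esub> inv\<^bsub>G\<^esub> g | g. g \<in> carrier G}"

definition conj_classes_subgroups :: "('g, 'b) monoid_scheme \<Rightarrow> 'g set set set" where
  "conj_classes_subgroups G = {subgroup_conj_class G H | H. subgroup H G}"

definition elem_orders :: "('k, 'c) monoid_scheme \<Rightarrow> nat set" where
  "elem_orders K = {group.ord K h | h. h \<in> carrier K}"

definition subgroup_index :: "('g, 'b) monoid_scheme \<Rightarrow> 'g set \<Rightarrow> nat" where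
  "subgroup_index G H = card (rcosets\<^bsub>G\<^esub> H)"

text \<open>\<open>\<Sigma>_[H]\<close> for a conjugacy class C = [H], computed from a representative H \<in> C
  (the result does not depend on the representative).\<close>
definition Sigma_class :: "('g, 'b) monoid_scheme \<Rightarrow> 'g set set \<Rightarrow> (nat \<times> nat) set" where
  "Sigma_class G C = {(\<delta>, subgroup_index G H div \<delta>) | \<delta> H.
       H \<in> C \<and> \<delta> \<in> elem_orders ((G\<lparr>carrier := normalizer G H\<rparr>) Mod H)}"

text \<open>\<open>O_n(S)\<close> realised as the set of closed orbits of S in A of cardinality exactly n;
  the count is its cardinality (together with finiteness).\<close>
definition closed_orbits :: "('a \<Rightarrow> 'a) \<Rightarrow> 'a set \<Rightarrow> nat \<Rightarrow> 'a set set" where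
  "closed_orbits S A n = {P. \<exists>x\<in>A. (S ^^ n) x = x \<and> P = {(S ^^ k) x | k. k < n} \<and> card P = n}"

definition quotient_map :: "('g, 'b) monoid_scheme \<Rightarrow> ('g \<Rightarrow> 'a \<Rightarrow> 'a) \<Rightarrow> ('a \<Rightarrow> 'a) \<Rightarrow> 'a set \<Rightarrow> 'a set" where
  "quotient_map G \<phi> T Orb = orbit G \<phi> (T (SOME x. x \<in> Orb))"

end

theory Submission
  imports Defs "HOL-Algebra.Zassenhaus" "HOL-Library.Countable_Set"
begin

definition Per :: "('a \<Rightarrow> 'a) \<Rightarrow> 'a set \<Rightarrow> nat \<Rightarrow> 'a set" where
  "Per R A m = {x\<in>A. \<forall>p. (R^^p) x = x \<longleftrightarrow> m dvd p}"

lemma funpow_mult_period: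
  assumes "(R^^m) x = x" shows "(R^^(m*q)) x = x"
proof (induction q)
  case 0 then show ?case by simp
next
  case (Suc q)
  have "(R^^(m*Suc q)) x = (R^^m) ((R^^(m*q)) x)"
    by (simp add: funpow_add)
  then show ?case using Suc assms by simp
qed

lemma funpow_mod_period:
  assumes "(R^^m) x = x" shows "(R^^p) x = (R^^(p mod m)) x"
proof -
  have "p = p mod m + m*(p div m)" by simp
  then have "(R^^p) x = (R^^(p mod m)) ((R^^(m*(p div m))) x)"
    by (metis comp_apply funpow_add)
  then show ?thesis using funpow_mult_period[OF assms] by simp
qed

lemma per_neq:
  assumes "\<forall>p. (R^^p) x = x \<longleftrightarrow> m dvd p" "a < b" "b < m"
  shows "(R^^a) x \<noteq> (R^^b) x"
proof
  assume eq: "(R^^a) x = (R^^b) x"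
  have mm: "(R^^m) x = x" using assms(1) by simp
  have "(R^^(m-b+a)) x = (R^^(m-b)) ((R^^a) x)"
    by (simp add: funpow_add)
  also have "\<dots> = (R^^(m-b)) ((R^^b) x)" using eq by simp
  also have "\<dots> = (R^^(m-b+b)) x" by (simp add: funpow_add)
  also have "\<dots> = x" using assms mm by simp
  finally have "m dvd (m-b+a)" using assms(1) by blast
  moreover have "0 < m-b+a" "m-b+a < m" using assms by auto
  ultimately show False using nat_dvd_not_less by blast
qed

lemma per_inj:
  assumes "\<forall>p. (R^^p) x = x \<longleftrightarrow> m dvd p"
  shows "inj_on (\<lambda>k. (R^^k) x) {..<m}"
proof (rule inj_onI)
  fix a b assume ab: "a \<in> {..<m}" "b \<in> {..<m}" "(R^^a) x = (R^^b) x"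
  show "a = b"
  proof (rule ccontr)
    assume "a \<noteq> b"
    then consider "a < b" | "b < a" by linarith
    then show False
    proof cases
      case 1 then show False using per_neq[OF assms 1] ab by auto
    next
      case 2 then show False using per_neq[OF assms 2] ab by auto
    qed
  qed
qed

lemma funpow_in:
  assumes "R ` A \<subseteq> A" "x \<in> A" shows "(R^^k) x \<in> A"
  using assms by (induction k) auto

lemma per_iter:
  assumes "R ` A \<subseteq> A" "x \<in> Per R A m" "0 < m"
  shows "(R^^a) x \<in> Per R A m"
proof -
  have xP: "\<forall>p. (R^^p) x = x \<longleftrightarrow> m dvd p" and xA: "x \<in> A" using assms(2) unfolding Per_def by auto
  have mm: "(R^^m) x = x" using xP by simp
  have inj: "inj_on (\<lambda>k. (R^^k) x) {..<m}" using per_inj[OF xP] .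
  have "(R^^p) ((R^^a) x) = (R^^a) x \<longleftrightarrow> m dvd p" for p
  proof -
    have "(R^^p) ((R^^a) x) = (R^^((p+a) mod m)) x"
      using funpow_mod_period[OF mm, of "p+a"] by (simp add: funpow_add)
    moreover have "(R^^a) x = (R^^(a mod m)) x" using funpow_mod_period[OF mm] .
    ultimately have "(R^^p) ((R^^a) x) = (R^^a) x \<longleftrightarrow> (p+a) mod m = a mod m"
      using inj_onD[OF inj] assms(3) by (auto simp del: mod_add_left_eq)
    also have "\<dots> \<longleftrightarrow> m dvd p"
      using mod_eq_dvd_iff_nat[of a "p+a" m] by auto
    finally show ?thesis .
  qed
  then show ?thesis using funpow_in[OF assms(1) xA] unfolding Per_def by auto
qed

definition orb :: "('a \<Rightarrow> 'a) \<Rightarrow> nat \<Rightarrow> 'a \<Rightarrow> 'a set" where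
  "orb R m x = (\<lambda>k. (R^^k) x) ` {..<m}"

lemma closed_orbits_eq:
  assumes "R ` A \<subseteq> A" "0 < m"
  shows "closed_orbits R A m = orb R m ` Per R A m"
proof (rule Set.set_eqI, rule iffI)
  fix P assume "P \<in> closed_orbits R A m"
  then obtain x where x0: "x \<in> A" "(R^^m) x = x" "P = {(R^^k) x |k. k<m}" "card P = m"
    unfolding closed_orbits_def by blast
  have "P = orb R m x" using x0(3) unfolding orb_def by auto
  note x = x0(1,2) this x0(4)
  have inj: "inj_on (\<lambda>k. (R^^k) x) {..<m}"
    using x by (intro eq_card_imp_inj_on) (auto simp: orb_def)
  have "(R^^p) x = x \<longleftrightarrow> m dvd p" for p
  proof
    assume "(R^^p) x = x"
    then have "(R^^(p mod m)) x = (R^^0) x" using funpow_mod_period[OF x(2)] by simp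
    then have "p mod m = 0" using inj_onD[OF inj] assms(2) by auto
    then show "m dvd p" by auto
  next
    assume "m dvd p" then obtain q where "p = m*q" by auto
    then show "(R^^p) x = x" using funpow_mult_period[OF x(2)] by simp
  qed
  then show "P \<in> orb R m ` Per R A m" using x unfolding Per_def by auto
next
  fix P assume "P \<in> orb R m ` Per R A m"
  then obtain x where x: "x \<in> Per R A m" "P = orb R m x" by auto
  have xP: "\<forall>p. (R^^p) x = x \<longleftrightarrow> m dvd p" "x \<in> A" using x unfolding Per_def by auto
  have "card P = m" using x(2) per_inj[OF xP(1)] unfolding orb_def by (simp add: card_image)
  moreover have "P = {(R^^k) x |k. k<m}" using x(2) unfolding orb_def by auto
  moreover have "(R^^m) x = x" using xP(1) by simp
  ultimately show "P \<in> closed_orbits R A m" using xP(2) unfolding closed_orbits_def by blast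
qed

lemma orb_iter:
  assumes "R ` A \<subseteq> A" "x \<in> Per R A m" "0 < m"
  shows "orb R m ((R^^a) x) \<subseteq> orb R m x"
proof
  fix y assume "y \<in> orb R m ((R^^a) x)"
  then obtain k where k: "k < m" "y = (R^^k) ((R^^a) x)" unfolding orb_def by auto
  have mm: "(R^^m) x = x" using assms(2) unfolding Per_def by auto
  have "y = (R^^((k+a) mod m)) x" using k funpow_mod_period[OF mm, of "k+a"] by (simp add: funpow_add)
  then show "y \<in> orb R m x" unfolding orb_def using assms(3) by auto
qed

lemma orb_iter_eq:
  assumes "R ` A \<subseteq> A" "x \<in> Per R A m" "0 < m"
  shows "orb R m ((R^^a) x) = orb R m x"
proof
  show "orb R m ((R^^a) x) \<subseteq> orb R m x" using orb_iter[OF assms] .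
  have y: "(R^^a) x \<in> Per R A m" using per_iter[OF assms] .
  have mm: "(R^^m) x = x" using assms(2) unfolding Per_def by auto
  have "(R^^(m - a mod m)) ((R^^a) x) = x"
  proof -
    have "(R^^(m - a mod m)) ((R^^a) x) = (R^^(m - a mod m + a)) x" by (simp add: funpow_add)
    also have "\<dots> = (R^^((m - a mod m + a) mod m)) x" using funpow_mod_period[OF mm] .
    also have "(m - a mod m + a) mod m = 0"
    proof -
      have lt: "a mod m < m" using assms(3) by simp
      have le: "a mod m \<le> a" by simp
      have "m - a mod m + a = m + (a - a mod m)" using lt le by arith
      also have "a - a mod m = m * (a div m)" by (simp add: minus_mod_eq_mult_div)
      finally have "m - a mod m + a = m * (Suc (a div m))" by simp
      then show ?thesis by simp
    qed
    finally show ?thesis by simp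
  qed
  then show "orb R m x \<subseteq> orb R m ((R^^a) x)"
    using orb_iter[OF assms(1) y assms(3), of "m - a mod m"] by simp
qed

lemma card_closed_orbits:
  assumes "R ` A \<subseteq> A" "0 < m" "finite (Per R A m)"
  shows "finite (closed_orbits R A m) \<and> m * card (closed_orbits R A m) = card (Per R A m)"
proof -
  let ?C = "orb R m ` Per R A m"
  have fC: "finite ?C" using assms(3) by simp
  have U: "\<Union>?C = Per R A m"
  proof
    show "\<Union>?C \<subseteq> Per R A m"
      using per_iter[OF assms(1) _ assms(2)] unfolding orb_def by auto
    show "Per R A m \<subseteq> \<Union>?C"
    proof
      fix x assume "x \<in> Per R A m"
      moreover have "x \<in> orb R m x" unfolding orb_def using assms(2) by (auto intro: image_eqI[of _ _ 0])
      ultimately show "x \<in> \<Union>?C" by auto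
    qed
  qed
  have cards: "\<And>c. c\<in>?C \<Longrightarrow> card c = m"
  proof -
    fix c assume "c \<in> ?C"
    then obtain x where "x \<in> Per R A m" "c = orb R m x" by auto
    then show "card c = m" unfolding orb_def Per_def using per_inj[of R x m]
      by (auto simp: card_image)
  qed
  have disj: "\<And>c1 c2. c1\<in>?C \<Longrightarrow> c2\<in>?C \<Longrightarrow> c1 \<noteq> c2 \<Longrightarrow> c1 \<inter> c2 = {}"
  proof -
    fix c1 c2 assume c: "c1 \<in> ?C" "c2 \<in> ?C" "c1 \<noteq> c2"
    then obtain x y where xy: "x \<in> Per R A m" "y \<in> Per R A m" "c1 = orb R m x" "c2 = orb R m y" by auto
    show "c1 \<inter> c2 = {}"
    proof (rule ccontr)
      assume "c1 \<inter> c2 \<noteq> {}"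
      then obtain a b where "(R^^a) x = (R^^b) y" using xy unfolding orb_def by auto
      then have "orb R m x = orb R m y"
        using orb_iter_eq[OF assms(1) xy(1) assms(2), of a] orb_iter_eq[OF assms(1) xy(2) assms(2), of b]
        by simp
      then show False using xy c by simp
    qed
  qed
  have fU: "finite (\<Union>?C)" using U assms(3) by simp
  have "m * card ?C = card (\<Union>?C)"
    using card_partition[OF fC fU cards disj] .
  then show ?thesis using closed_orbits_eq[OF assms(1,2)] U fC by simp
qed

context group begin

lemma normalizer_carrier: "normalizer G H \<subseteq> carrier G"
  unfolding normalizer_def stabilizer_def by auto

lemma normalizer_lcos:
  assumes H: "subgroup H G" and c: "c \<in> normalizer G H" shows "c <# H = H #> c"
proof -
  have HG: "H \<subseteq> carrier G" using subgroup.subset[OF H] .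
  have cG: "c \<in> carrier G" and eq: "c <# H #> inv c = H"
    using c HG unfolding normalizer_def stabilizer_def by auto
  have "(c <# H #> inv c) #> c = c <# H #> (inv c \<otimes> c)"
    by (rule coset_mult_assoc) (auto simp: cG HG l_coset_subset_G)
  also have "\<dots> = c <# H" using cG HG by (simp add: l_coset_subset_G)
  finally show ?thesis using eq by simp
qed

lemma normalizer_pow:
  assumes H: "subgroup H G" and c: "c \<in> normalizer G H" shows "c [^] (q::nat) \<in> normalizer G H"
proof (induction q)
  case 0 then show ?case using subgroup.one_closed[OF normalizer_imp_subgroup[OF subgroup.subset[OF H]]] by simp
next
  case (Suc q) then show ?case using subgroup.m_closed[OF normalizer_imp_subgroup[OF subgroup.subset[OF H]]] c by simp
qed

lemma rcos_eq_iff: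
  assumes H: "subgroup H G" and a: "a \<in> carrier G" and g: "g \<in> carrier G"
  shows "H #> a = H #> g \<longleftrightarrow> a \<otimes> inv g \<in> H"
proof
  have HG: "H \<subseteq> carrier G" using subgroup.subset[OF H] .
  assume "H #> a = H #> g"
  then have "H #> (a \<otimes> inv g) = H" using coset_mult_inv2 a g HG by blast
  then show "a \<otimes> inv g \<in> H" using coset_join1 H a g by blast
next
  have HG: "H \<subseteq> carrier G" using subgroup.subset[OF H] .
  assume "a \<otimes> inv g \<in> H"
  then have "H #> (a \<otimes> inv g) = H" using coset_join2 H a g by blast
  then show "H #> a = H #> g" using coset_mult_inv1 a g HG by blast
qed

lemma normalizer_act:
  assumes H: "subgroup H G" and c: "c \<in> normalizer G H" and g: "g \<in> carrier G"
  shows "c <# (H #> g) = H #> (c \<otimes> g)"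
proof -
  have HG: "H \<subseteq> carrier G" using subgroup.subset[OF H] .
  have cG: "c \<in> carrier G" using c normalizer_carrier by auto
  have "c <# (H #> g) = (c <# H) #> g" using coset_assoc cG g HG by blast
  also have "\<dots> = (H #> c) #> g" using normalizer_lcos[OF H c] by simp
  also have "\<dots> = H #> (c \<otimes> g)" using coset_mult_assoc HG cG g by blast
  finally show ?thesis .
qed

lemma normalizer_fix_iff:
  assumes H: "subgroup H G" and c: "c \<in> normalizer G H" and g: "g \<in> carrier G"
  shows "c <# (H #> g) = H #> g \<longleftrightarrow> c \<in> H"
proof -
  have cG: "c \<in> carrier G" using c normalizer_carrier by auto
  have "c <# (H #> g) = H #> g \<longleftrightarrow> H #> (c \<otimes> g) = H #> g" using normalizer_act[OF H c g] by simp
  also have "\<dots> \<longleftrightarrow> c \<otimes> g \<otimes> inv g \<in> H" using rcos_eq_iff[OF H] cG g by simp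
  also have "c \<otimes> g \<otimes> inv g = c" using cG g by (simp add: m_assoc)
  finally show ?thesis .
qed

lemma pow_in_iff_ord:
  assumes H: "subgroup H G" and c: "c \<in> normalizer G H"
  shows "c [^] (q::nat) \<in> H \<longleftrightarrow> group.ord ((G\<lparr>carrier := normalizer G H\<rparr>) Mod H) (H #> c) dvd q"
proof -
  let ?N = "G\<lparr>carrier := normalizer G H\<rparr>"
  interpret nH: normal H ?N using subgroup_in_normalizer[OF H] .
  interpret Q: group "?N Mod H" using nH.factorgroup_is_group .
  have cN: "c \<in> carrier ?N" using c by simp
  have cG: "c \<in> carrier G" using c normalizer_carrier by auto
  have Xc: "H #> c \<in> carrier (?N Mod H)"
    using cN unfolding FactGroup_def RCOSETS_def by auto
  have pw: "(H #> c) [^]\<^bsub>?N Mod H\<^esub> q = H #> (c [^] q)"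
    using nH.FactGroup_pow[OF cN, of q] nat_pow_consistent[of c q "normalizer G H"] by simp
  have "c [^] q \<in> H \<longleftrightarrow> H #> (c [^] q) = H"
    using coset_join1[of H "c [^] q"] coset_join2[of "c [^] q" H] H cG by auto
  also have "\<dots> \<longleftrightarrow> (H #> c) [^]\<^bsub>?N Mod H\<^esub> q = \<one>\<^bsub>?N Mod H\<^esub>" using pw by simp
  also have "\<dots> \<longleftrightarrow> Q.ord (H #> c) dvd q" using Q.pow_eq_id[OF Xc] .
  finally show ?thesis .
qed

lemma ord_props:
  assumes fin: "finite (carrier G)" and H: "subgroup H G" and c: "c \<in> normalizer G H"
  shows "group.ord ((G\<lparr>carrier := normalizer G H\<rparr>) Mod H) (H #> c) \<ge> 1"
    "group.ord ((G\<lparr>carrier := normalizer G H\<rparr>) Mod H) (H #> c) dvd subgroup_index G H"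
proof -
  let ?N = "G\<lparr>carrier := normalizer G H\<rparr>"
  interpret nH: normal H ?N using subgroup_in_normalizer[OF H] .
  interpret Q: group "?N Mod H" using nH.factorgroup_is_group .
  have cN: "c \<in> carrier ?N" using c by simp
  have Xc: "H #> c \<in> carrier (?N Mod H)"
    using cN unfolding FactGroup_def RCOSETS_def by auto
  have NG: "normalizer G H \<subseteq> carrier G" using normalizer_carrier .
  have finN: "finite (normalizer G H)" using fin NG finite_subset by blast
  have finQ: "finite (carrier (?N Mod H))"
    unfolding FactGroup_def RCOSETS_def using finN by simp
  show "Q.ord (H #> c) \<ge> 1" using Q.ord_ge_1[OF finQ Xc] .
  have d1: "Q.ord (H #> c) dvd order (?N Mod H)" using Q.ord_dvd_group_order[OF Xc] .
  have HN: "subgroup H ?N" using nH.subgroup_axioms .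
  have l1: "card (rcosets\<^bsub>?N\<^esub> H) * card H = card (normalizer G H)"
    using nH.lagrange[OF HN] unfolding order_def by simp
  have l2: "card (rcosets H) * card H = card (carrier G)"
    using lagrange[OF H] unfolding order_def .
  have SN: "subgroup (normalizer G H) G" using normalizer_imp_subgroup[OF subgroup.subset[OF H]] .
  have l3: "card (rcosets (normalizer G H)) * card (normalizer G H) = card (carrier G)"
    using lagrange[OF SN] unfolding order_def .
  have Hpos: "card H > 0"
    using subgroup.one_closed[OF H] fin subgroup.subset[OF H] card_gt_0_iff finite_subset by blast
  have "card (rcosets H) * card H = (card (rcosets (normalizer G H)) * card (rcosets\<^bsub>?N\<^esub> H)) * card H"
    using l1 l2 l3 by (metis mult.assoc)
  then have "card (rcosets H) = card (rcosets (normalizer G H)) * card (rcosets\<^bsub>?N\<^esub> H)"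
    using Hpos by simp
  moreover have "order (?N Mod H) = card (rcosets\<^bsub>?N\<^esub> H)"
    unfolding order_def FactGroup_def by simp
  ultimately show "Q.ord (H #> c) dvd subgroup_index G H"
    using d1 unfolding subgroup_index_def by (metis dvd_mult dvd_mult2 mult.commute)
qed

end

lemma funpow_conj:
  assumes "R ` A \<subseteq> A" "\<And>a. a \<in> A \<Longrightarrow> S (E a) = E (R a)" "a \<in> A"
  shows "(S^^k) (E a) = E ((R^^k) a)"
proof (induction k)
  case 0 show ?case by simp
next
  case (Suc k)
  have "(R^^k) a \<in> A" using funpow_in[OF assms(1) assms(3)] .
  then show ?case using Suc assms(2) by simp
qed

lemma closed_orbits_sub:
  assumes "R ` A \<subseteq> A" "P \<in> closed_orbits R A m" shows "P \<subseteq> A"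
proof -
  obtain x where "x \<in> A" "P = {(R^^k) x | k. k<m}" using assms(2) unfolding closed_orbits_def by blast
  then show ?thesis using funpow_in[OF assms(1)] by auto
qed

lemma closed_orbits_conj:
  assumes bij: "bij_betw E A B" and RA: "R ` A \<subseteq> A" and c: "\<And>a. a \<in> A \<Longrightarrow> S (E a) = E (R a)"
  shows "closed_orbits S B m = (\<lambda>P. E ` P) ` closed_orbits R A m"
proof (rule Set.set_eqI, rule iffI)
  have inj: "inj_on E A" using bij bij_betw_def by auto
  fix Q assume "Q \<in> closed_orbits S B m"
  then obtain y where y: "y \<in> B" "(S^^m) y = y" "Q = {(S^^k) y |k. k < m}" "card Q = m"
    unfolding closed_orbits_def by blast
  obtain x where x: "x \<in> A" "y = E x" using bij y(1) unfolding bij_betw_def by auto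
  have it: "\<And>k. (S^^k) y = E ((R^^k) x)" using funpow_conj[where R=R and A=A and S=S and E=E, OF RA c x(1)] x(2) by simp
  have "E ((R^^m) x) = E x" using it[of m] y(2) x(2) by simp
  moreover have "(R^^m) x \<in> A" by (rule funpow_in[OF RA x(1)])
  ultimately have xm: "(R^^m) x = x" using inj_onD[OF inj] x(1) by metis
  have Qe: "Q = E ` {(R^^k) x | k. k<m}" using y(3) it by auto
  have subA: "{(R^^k) x | k. k<m} \<subseteq> A" using funpow_in[OF RA x(1)] by auto
  have "card {(R^^k) x | k. k<m} = m"
    using Qe y(4) card_image[OF inj_on_subset[OF inj subA]] by simp
  then have "{(R^^k) x | k. k<m} \<in> closed_orbits R A m"
    unfolding closed_orbits_def using x(1) xm by (intro CollectI bexI[of _ x]) auto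
  then show "Q \<in> (\<lambda>P. E ` P) ` closed_orbits R A m" using Qe by blast
next
  have inj: "inj_on E A" using bij bij_betw_def by auto
  fix Q assume "Q \<in> (\<lambda>P. E ` P) ` closed_orbits R A m"
  then obtain P where P: "P \<in> closed_orbits R A m" "Q = E ` P" by auto
  then obtain x where x0: "x\<in>A" "(R^^m) x = x" "P = {(R^^k) x|k. k<m}" "card P = m"
    unfolding closed_orbits_def by blast
  have x: "x\<in>A" "(R^^m) x = x" "Q = E ` {(R^^k) x|k. k<m}" "card {(R^^k) x |k. k<m} = m"
    using x0 P by auto
  have it: "\<And>k. (S^^k) (E x) = E ((R^^k) x)" using funpow_conj[where R=R and A=A and S=S and E=E, OF RA c x(1)] by simp
  have subA: "{(R^^k) x | k. k<m} \<subseteq> A" using funpow_in[OF RA x(1)] by auto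
  have Q2: "Q = {(S^^k) (E x) | k. k<m}" using x(3) it by auto
  have "card Q = m" using x(3,4) card_image[OF inj_on_subset[OF inj subA]] by simp
  moreover have "E x \<in> B" using bij x(1) unfolding bij_betw_def by auto
  moreover have "(S^^m) (E x) = E x" using it[of m] x(2) by simp
  ultimately show "Q \<in> closed_orbits S B m" unfolding closed_orbits_def
    using Q2 by (intro CollectI bexI[of _ "E x"]) auto
qed

lemma card_closed_orbits_conj:
  assumes bij: "bij_betw E A B" and RA: "R ` A \<subseteq> A" and c: "\<And>a. a \<in> A \<Longrightarrow> S (E a) = E (R a)"
    and fin: "finite (closed_orbits R A m)"
  shows "finite (closed_orbits S B m) \<and> card (closed_orbits S B m) = card (closed_orbits R A m)"
proof -
  have inj: "inj_on E A" using bij bij_betw_def by auto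
  have sub: "\<Union>(closed_orbits R A m) \<subseteq> A" using closed_orbits_sub[OF RA] by blast
  have inj2: "inj_on E (\<Union>(closed_orbits R A m))" by (rule inj_on_subset[OF inj sub])
  have inj3: "inj_on ((`) E) (closed_orbits R A m)" by (rule inj_on_image[OF inj2])
  have eq: "closed_orbits S B m = (`) E ` closed_orbits R A m" by (rule closed_orbits_conj[OF bij RA c])
  show ?thesis unfolding eq using card_image[OF inj3] fin by simp
qed

lemma wmetric:
  fixes w :: "'a \<Rightarrow> real"
  assumes nn: "\<And>x. w x \<ge> 0" and uniq: "\<And>x y. x \<in> X \<Longrightarrow> y \<in> X \<Longrightarrow> w x = 0 \<Longrightarrow> w y = 0 \<Longrightarrow> x = y"
  shows "Metric_space X (\<lambda>x y. if x = y then 0 else max (w x) (w y))"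
proof
  fix x y z
  show "0 \<le> (if x = y then 0 else max (w x) (w y))" using nn[of x] by (simp add: le_max_iff_disj)
  show "(if x = y then 0 else max (w x) (w y)) = (if y = x then 0 else max (w y) (w x))"
    by (simp add: max.commute)
  assume "x \<in> X" "y \<in> X"
  then show "((if x = y then 0 else max (w x) (w y)) = 0) = (x = y)"
    using uniq[of x y] nn[of x] nn[of y] by (auto simp: max_def)
next
  fix x y z
  show "(if x = z then 0 else max (w x) (w z))
        \<le> (if x = y then 0 else max (w x) (w y)) + (if y = z then 0 else max (w y) (w z))"
    using nn[of x] nn[of y] nn[of z] by (auto simp: max_def)
qed

lemma wcompact:
  fixes w :: "'a \<Rightarrow> real"
  assumes Ms: "Metric_space X d" and dd: "d = (\<lambda>x y. if x = y then 0 else max (w x) (w y))"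
    and nn: "\<And>x. w x \<ge> 0" and p: "p \<in> X" "w p = 0"
    and fin: "\<And>e. e > 0 \<Longrightarrow> finite {x\<in>X. w x \<ge> e}"
  shows "compact_space (Metric_space.mtopology X d)"
proof -
  interpret Metric_space X d by fact
  show ?thesis unfolding compact_space_def compactin_def
  proof (intro conjI allI impI)
    show "topspace mtopology \<subseteq> topspace mtopology" by simp
    fix U assume U: "(\<forall>u\<in>U. openin mtopology u) \<and> topspace mtopology \<subseteq> \<Union>U"
    obtain u0 where u0: "u0 \<in> U" "p \<in> u0" using U p by auto
    have "openin mtopology u0" using U u0 by blast
    then obtain r where r: "r > 0" "mball p r \<subseteq> u0" using u0(2) unfolding openin_mtopology by blast
    have sub: "{x\<in>X. w x < r} \<subseteq> u0"
    proof
      fix x assume x: "x \<in> {x\<in>X. w x < r}"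
      show "x \<in> u0"
      proof (cases "x = p")
        case True then show ?thesis using u0 by simp
      next
        case False
        then have "d p x < r" using x p nn[of x] dd by (simp add: max_def)
        then show ?thesis using r x p unfolding mball_def by auto
      qed
    qed
    let ?F = "{x\<in>X. w x \<ge> r}"
    have "\<forall>x\<in>?F. \<exists>u\<in>U. x \<in> u" using U by auto
    then have "\<forall>x\<in>?F. \<exists>u. u \<in> U \<and> x \<in> u" by blast
    then have "\<exists>f. \<forall>x\<in>?F. f x \<in> U \<and> x \<in> f x" by (rule bchoice)
    then obtain f where f: "\<forall>x\<in>?F. f x \<in> U \<and> x \<in> f x" by blast
    have "topspace mtopology \<subseteq> \<Union>(insert u0 (f ` ?F))"
    proof
      fix x assume "x \<in> topspace mtopology"
      then have "x \<in> X" by simp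
      then show "x \<in> \<Union>(insert u0 (f ` ?F))"
        using sub f by (cases "w x < r") auto
    qed
    moreover have "finite (insert u0 (f ` ?F))" using fin[OF r(1)] by simp
    moreover have "insert u0 (f ` ?F) \<subseteq> U" using f u0 by auto
    ultimately show "\<exists>F. finite F \<and> F \<subseteq> U \<and> topspace mtopology \<subseteq> \<Union>F" by blast
  qed
qed

lemma wcont:
  fixes w :: "'a \<Rightarrow> real"
  assumes Ms: "Metric_space X d" and dd: "d = (\<lambda>x y. if x = y then 0 else max (w x) (w y))"
    and F: "\<And>x. x \<in> X \<Longrightarrow> F x \<in> X" "\<And>x. x \<in> X \<Longrightarrow> w (F x) = w x"
  shows "continuous_map (Metric_space.mtopology X d) (Metric_space.mtopology X d) F"
proof -
  interpret Metric_space X d by fact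
  have le: "d (F a) (F x) \<le> d a x" if "a \<in> X" "x \<in> X" for a x
  proof (cases "F a = F x")
    case True then show ?thesis using dd nonneg by simp
  next
    case False
    then have "a \<noteq> x" by auto
    then show ?thesis using False dd F(2)[OF that(1)] F(2)[OF that(2)] by simp
  qed
  show ?thesis unfolding metric_continuous_map[OF Ms]
  proof (intro conjI ballI allI impI)
    show "F ` X \<subseteq> X" using F by auto
    fix a and e :: real assume "a \<in> X" "e > 0"
    then show "\<exists>\<delta>>0. \<forall>x. x \<in> X \<and> d a x < \<delta> \<longrightarrow> d (F a) (F x) < e"
      using le by (meson order_le_less_trans)
  qed
qed

locale prop10 = group G for G :: "('g, 'b) monoid_scheme" (structure) +
  fixes b :: "'g set set \<Rightarrow> nat \<times> nat \<Rightarrow> nat \<Rightarrow> nat"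
  assumes fin: "finite (carrier G)"
    and b1: "b (subgroup_conj_class G (carrier G)) (1,1) 1 \<ge> 1"
begin

abbreviation "CC \<equiv> conj_classes_subgroups G"

definition good :: "'g set set \<Rightarrow> nat \<times> nat \<Rightarrow> 'g set \<times> 'g \<Rightarrow> bool" where
  "good C \<sigma> p \<longleftrightarrow> subgroup (fst p) G \<and> fst p \<in> C \<and> snd p \<in> normalizer G (fst p) \<and>
     fst \<sigma> = group.ord ((G\<lparr>carrier := normalizer G (fst p)\<rparr>) Mod (fst p)) (fst p #> snd p) \<and>
     snd \<sigma> = subgroup_index G (fst p) div fst \<sigma>"

definition hc :: "'g set set \<Rightarrow> nat \<times> nat \<Rightarrow> 'g set \<times> 'g" where
  "hc C \<sigma> = (SOME p. good C \<sigma> p)"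

lemma conj_class_mem_subgroup:
  assumes "C \<in> CC" "H \<in> C" shows "subgroup H G"
proof -
  obtain H0 where H0: "subgroup H0 G" "C = subgroup_conj_class G H0"
    using assms(1) unfolding conj_classes_subgroups_def by auto
  then obtain g where "g \<in> carrier G" "H = g <# H0 #> inv g"
    using assms(2) unfolding subgroup_conj_class_def by auto
  then show ?thesis using subgroup_conjugation_is_surj2 H0(1) by simp
qed

lemma sigma_good:
  assumes C: "C \<in> CC" and s: "\<sigma> \<in> Sigma_class G C"
  shows "good C \<sigma> (hc C \<sigma>)"
proof -
  obtain \<delta> H where dH: "\<sigma> = (\<delta>, subgroup_index G H div \<delta>)" "H \<in> C"
    "\<delta> \<in> elem_orders ((G\<lparr>carrier := normalizer G H\<rparr>) Mod H)"
    using s unfolding Sigma_class_def by auto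
  obtain X where X: "X \<in> carrier ((G\<lparr>carrier := normalizer G H\<rparr>) Mod H)"
    "\<delta> = group.ord ((G\<lparr>carrier := normalizer G H\<rparr>) Mod H) X"
    using dH(3) unfolding elem_orders_def by auto
  obtain a where a: "a \<in> normalizer G H" "X = H #> a"
    using X(1) unfolding FactGroup_def RCOSETS_def by auto
  have "good C \<sigma> (H, a)"
    unfolding good_def using conj_class_mem_subgroup[OF C dH(2)] dH a X by simp
  then show ?thesis unfolding hc_def by (rule someI)
qed

lemma finite_CC: "finite CC"
proof -
  have "CC = subgroup_conj_class G ` {H. subgroup H G}"
    unfolding conj_classes_subgroups_def by auto
  moreover have "{H. subgroup H G} \<subseteq> Pow (carrier G)" using subgroup.subset by auto
  ultimately show ?thesis using fin by (metis finite_Pow_iff finite_imageI finite_subset)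
qed

lemma finite_class: "C \<in> CC \<Longrightarrow> finite C"
proof -
  assume "C \<in> CC"
  then obtain H0 where "C = subgroup_conj_class G H0"
    unfolding conj_classes_subgroups_def by auto
  then have "C = (\<lambda>g. g <# H0 #> inv g) ` carrier G"
    unfolding subgroup_conj_class_def by auto
  then show "finite C" using fin by simp
qed

lemma finite_Sigma: "C \<in> CC \<Longrightarrow> finite (Sigma_class G C)"
proof -
  assume C: "C \<in> CC"
  let ?Q = "\<lambda>H. (G\<lparr>carrier := normalizer G H\<rparr>) Mod H"
  have "Sigma_class G C \<subseteq> (\<Union>H\<in>C. (\<lambda>\<delta>. (\<delta>, subgroup_index G H div \<delta>)) ` (group.ord (?Q H) ` carrier (?Q H)))"
    unfolding Sigma_class_def elem_orders_def by auto
  moreover have "finite (carrier (?Q H))" for H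
  proof -
    have "finite (normalizer G H)" using normalizer_carrier fin finite_subset by blast
    then show ?thesis unfolding FactGroup_def RCOSETS_def by simp
  qed
  ultimately show ?thesis using finite_class[OF C] by (meson finite_UN_I finite_imageI finite_subset)
qed


definition HH :: "'g set set \<times> (nat \<times> nat) \<times> nat \<times> nat \<Rightarrow> 'g set" where
  "HH i = fst (hc (fst i) (fst (snd i)))"
definition cc :: "'g set set \<times> (nat \<times> nat) \<times> nat \<times> nat \<Rightarrow> 'g" where
  "cc i = snd (hc (fst i) (fst (snd i)))"
definition nn :: "'g set set \<times> (nat \<times> nat) \<times> nat \<times> nat \<Rightarrow> nat" where
  "nn i = fst (snd (snd i))"
definition dl :: "'g set set \<times> (nat \<times> nat) \<times> nat \<times> nat \<Rightarrow> nat" where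
  "dl i = fst (fst (snd i))"
definition th :: "'g set set \<times> (nat \<times> nat) \<times> nat \<times> nat \<Rightarrow> nat" where
  "th i = snd (fst (snd i))"

definition II :: "('g set set \<times> (nat \<times> nat) \<times> nat \<times> nat) set" where
  "II = Sigma CC (\<lambda>C. Sigma (Sigma_class G C) (\<lambda>\<sigma>. Sigma {1..} (\<lambda>n. {..<b C \<sigma> n})))"

lemma II_good:
  assumes "i \<in> II"
  shows "subgroup (HH i) G" "cc i \<in> normalizer G (HH i)" "dl i \<ge> 1"
    "subgroup_index G (HH i) = th i * dl i" "\<And>q. cc i [^] (q::nat) \<in> HH i \<longleftrightarrow> dl i dvd q"
    "nn i \<ge> 1" "cc i \<in> carrier G" "HH i \<subseteq> carrier G"
proof -
  obtain C \<sigma> n j where i: "i = (C,\<sigma>,n,j)" "C \<in> CC" "\<sigma> \<in> Sigma_class G C" "n \<ge> 1" "j < b C \<sigma> n"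
    using assms unfolding II_def by auto
  have g: "good C \<sigma> (hc C \<sigma>)" using sigma_good i by blast
  show H: "subgroup (HH i) G" and c: "cc i \<in> normalizer G (HH i)"
    using g i unfolding good_def HH_def cc_def by auto
  have d: "dl i = group.ord ((G\<lparr>carrier := normalizer G (HH i)\<rparr>) Mod (HH i)) (HH i #> cc i)"
    and t: "th i = subgroup_index G (HH i) div dl i"
    using g i unfolding good_def HH_def cc_def dl_def th_def by auto
  show "dl i \<ge> 1" using ord_props(1)[OF fin H c] d by simp
  have "dl i dvd subgroup_index G (HH i)" using ord_props(2)[OF fin H c] d by simp
  then show "subgroup_index G (HH i) = th i * dl i" using t by simp
  show "\<And>q. cc i [^] (q::nat) \<in> HH i \<longleftrightarrow> dl i dvd q" using pow_in_iff_ord[OF H c] d by simp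
  show "nn i \<ge> 1" using i unfolding nn_def by simp
  show "cc i \<in> carrier G" using c normalizer_carrier by auto
  show "HH i \<subseteq> carrier G" using subgroup.subset[OF H] .
qed

definition PP where "PP = Sigma II (\<lambda>i. (rcosets (HH i)) \<times> {..<nn i})"

definition Ta where
  "Ta = (\<lambda>(i,S,k). if Suc k < nn i then (i,S,Suc k) else (i, cc i <# S, 0))"

definition phia where "phia g = (\<lambda>(i,S,k). (i, S #> inv g, k))"

lemma rcosets_sub: "subgroup H G \<Longrightarrow> S \<in> rcosets H \<Longrightarrow> S \<subseteq> carrier G"
  using subgroup.rcosets_carrier is_group by blast

lemma Ta_in: "x \<in> PP \<Longrightarrow> Ta x \<in> PP"
proof -
  assume "x \<in> PP"
  then obtain i S k where x: "x = (i,S,k)" "i \<in> II" "S \<in> rcosets (HH i)" "k < nn i"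
    unfolding PP_def by auto
  obtain g where g: "g \<in> carrier G" "S = HH i #> g" using x(3) unfolding RCOSETS_def by auto
  have "cc i <# S = HH i #> (cc i \<otimes> g)" using normalizer_act[OF II_good(1,2)[OF x(2)] g(1)] g by simp
  moreover have "cc i \<otimes> g \<in> carrier G" using II_good(7)[OF x(2)] g by simp
  ultimately have "cc i <# S \<in> rcosets (HH i)" using rcosetsI II_good(8)[OF x(2)] by simp
  then show "Ta x \<in> PP" using x II_good(6)[OF x(2)] unfolding PP_def Ta_def by auto
qed

lemma Ta_pow:
  assumes "(i,S,k) \<in> PP"
  shows "(Ta^^p) (i,S,k) = (i, (cc i [^] ((k+p) div nn i)) <# S, (k+p) mod nn i)"
proof -
  have i: "i \<in> II" and k: "k < nn i" and Sr: "S \<in> rcosets (HH i)"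
    using assms unfolding PP_def by auto
  have S: "S \<subseteq> carrier G" by (rule rcosets_sub[OF II_good(1)[OF i] Sr])
  show ?thesis
proof (induction p)
  case 0
  then show ?case using S k by (simp add: lcos_mult_one)
next
  case (Suc p)
  have n: "nn i > 0" using II_good(6)[OF i] by simp
  have c: "cc i \<in> carrier G" using II_good(7)[OF i] .
  let ?q = "(k+p) div nn i" and ?r = "(k+p) mod nn i"
  have rl: "?r < nn i" using n by simp
  show ?case
  proof (cases "Suc ?r < nn i")
    case True
    then have "(k + Suc p) mod nn i = Suc ?r" "(k + Suc p) div nn i = ?q"
      by (simp_all add: mod_Suc div_Suc)
    then show ?thesis using Suc True unfolding Ta_def by simp
  next
    case False
    then have e: "Suc ?r = nn i" using rl by simp
    then have "(k + Suc p) mod nn i = 0" "(k + Suc p) div nn i = Suc ?q"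
      by (simp_all add: mod_Suc div_Suc)
    moreover have "cc i <# (cc i [^] ?q <# S) = cc i [^] Suc ?q <# S"
    proof -
      have eq: "cc i [^] Suc ?q = cc i \<otimes> cc i [^] ?q" by (rule nat_pow_Suc2[OF c])
      show ?thesis unfolding eq by (rule lcos_m_assoc[OF S c nat_pow_closed[OF c]])
    qed
    ultimately show ?thesis using Suc False unfolding Ta_def by simp
  qed
qed
qed

lemma Ta_fix_iff:
  assumes x: "(i,S,k) \<in> PP"
  shows "(Ta^^p) (i,S,k) = (i,S,k) \<longleftrightarrow> nn i * dl i dvd p"
proof -
  have i: "i \<in> II" and k: "k < nn i" and Sr: "S \<in> rcosets (HH i)"
    using x unfolding PP_def by auto
  obtain g where g: "g \<in> carrier G" "S = HH i #> g" using Sr unfolding RCOSETS_def by auto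
  have n: "nn i > 0" using II_good(6)[OF i] by simp
  have H: "subgroup (HH i) G" and c: "cc i \<in> normalizer G (HH i)" using II_good[OF i] by auto
  have fx: "cc i [^] q <# S = S \<longleftrightarrow> dl i dvd q" for q :: nat
    using normalizer_fix_iff[OF H normalizer_pow[OF H c] g(1)] g(2) II_good(5)[OF i] by simp
  have modk: "(k+p) mod nn i = k \<longleftrightarrow> nn i dvd p"
    using mod_eq_dvd_iff_nat[of k "k+p" "nn i"] k by simp
  have "(Ta^^p) (i,S,k) = (i,S,k) \<longleftrightarrow> (k+p) mod nn i = k \<and> cc i [^] ((k+p) div nn i) <# S = S"
    using Ta_pow[OF x] by auto
  also have "\<dots> \<longleftrightarrow> nn i * dl i dvd p"
  proof
    assume a: "(k+p) mod nn i = k \<and> cc i [^] ((k+p) div nn i) <# S = S"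
    then obtain t where t: "p = nn i * t" using modk by auto
    have "(k+p) div nn i = t" using t k n by simp
    then have "dl i dvd t" using a fx by simp
    then show "nn i * dl i dvd p" using t by simp
  next
    assume a: "nn i * dl i dvd p"
    then obtain t where "p = nn i * dl i * t" by (rule dvdE)
    then have t: "p = nn i * (dl i * t)" by (simp add: mult.assoc)
    have "(k+p) div nn i = dl i * t" using t k n by simp
    moreover have "(k+p) mod nn i = k" using t k by simp
    ultimately show "(k+p) mod nn i = k \<and> cc i [^] ((k+p) div nn i) <# S = S" using fx by simp
  qed
  finally show ?thesis .
qed

lemma dvd_all_iff: "(\<forall>p. (a dvd p) = ((m::nat) dvd p)) \<longleftrightarrow> a = m"
  by (metis dvd_antisym dvd_refl)

lemma Ta_PP: "Ta ` PP \<subseteq> PP" using Ta_in by auto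

lemma Per_Ta:
  assumes m: "m \<ge> 1"
  shows "Per Ta PP m = Sigma {i\<in>II. nn i * dl i = m} (\<lambda>i. (rcosets (HH i)) \<times> {..<nn i})"
proof (rule Set.set_eqI)
  fix x
  show "x \<in> Per Ta PP m \<longleftrightarrow> x \<in> Sigma {i\<in>II. nn i * dl i = m} (\<lambda>i. (rcosets (HH i)) \<times> {..<nn i})"
  proof (cases "x \<in> PP")
    case True
    then obtain i S k where x: "x = (i,S,k)" unfolding PP_def by auto
    have "(\<forall>p. (Ta^^p) x = x \<longleftrightarrow> m dvd p) \<longleftrightarrow> nn i * dl i = m"
      using Ta_fix_iff[of i S k] True x dvd_all_iff[of "nn i * dl i" m] by simp
    then show ?thesis using True x unfolding Per_def PP_def by auto
  next
    case False then show ?thesis unfolding Per_def PP_def by auto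
  qed
qed

lemma sigma_pos: "C \<in> CC \<Longrightarrow> \<sigma> \<in> Sigma_class G C \<Longrightarrow> fst \<sigma> \<ge> 1"
proof -
  assume C: "C \<in> CC" and s: "\<sigma> \<in> Sigma_class G C"
  have g: "good C \<sigma> (hc C \<sigma>)" using sigma_good[OF C s] .
  then show "fst \<sigma> \<ge> 1" using ord_props(1)[OF fin] unfolding good_def by auto
qed

lemma sum_Sigma': "finite A \<Longrightarrow> (\<And>a. a \<in> A \<Longrightarrow> finite (B a)) \<Longrightarrow>
    sum f (Sigma A B) = (\<Sum>a\<in>A. \<Sum>b\<in>B a. f (a,b))"
  by (subst sum.Sigma) auto

lemma sum_4:
  assumes "finite A" "\<And>a. a \<in> A \<Longrightarrow> finite (B a)" "\<And>a b. a \<in> A \<Longrightarrow> b \<in> B a \<Longrightarrow> finite (C a b)"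
    "\<And>a b c. a \<in> A \<Longrightarrow> b \<in> B a \<Longrightarrow> c \<in> C a b \<Longrightarrow> finite (D a b c)"
  shows "sum f (Sigma A (\<lambda>a. Sigma (B a) (\<lambda>b. Sigma (C a b) (D a b)))) =
    (\<Sum>a\<in>A. \<Sum>b\<in>B a. \<Sum>c\<in>C a b. \<Sum>d\<in>D a b c. f (a,b,c,d))"
proof -
  have "sum f (Sigma A (\<lambda>a. Sigma (B a) (\<lambda>b. Sigma (C a b) (D a b)))) =
     (\<Sum>a\<in>A. \<Sum>y\<in>Sigma (B a) (\<lambda>b. Sigma (C a b) (D a b)). f (a,y))"
    using assms by (intro sum_Sigma') (auto intro!: finite_SigmaI)
  also have "\<dots> = (\<Sum>a\<in>A. \<Sum>b\<in>B a. \<Sum>z\<in>Sigma (C a b) (D a b). f (a,b,z))"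
    using assms by (intro sum.cong refl sum_Sigma') (auto intro!: finite_SigmaI)
  also have "\<dots> = (\<Sum>a\<in>A. \<Sum>b\<in>B a. \<Sum>c\<in>C a b. \<Sum>d\<in>D a b c. f (a,b,c,d))"
    using assms by (intro sum.cong refl sum_Sigma') auto
  finally show ?thesis .
qed

lemma finite_rcosets: "finite (rcosets H)"
  unfolding RCOSETS_def using fin by simp

lemma card_closed_Ta:
  assumes m: "m \<ge> 1"
  shows "finite (closed_orbits Ta PP m) \<and>
    card (closed_orbits Ta PP m) = (\<Sum>C\<in>CC. \<Sum>\<sigma>\<in>Sigma_class G C.
         (if fst \<sigma> dvd m then snd \<sigma> * b C \<sigma> (m div fst \<sigma>) else 0))"
proof -
  let ?NN = "\<lambda>\<sigma>. {n. 1 \<le> n \<and> n * fst \<sigma> = m}"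
  let ?Im = "{i\<in>II. nn i * dl i = m}"
  have Im: "?Im = Sigma CC (\<lambda>C. Sigma (Sigma_class G C) (\<lambda>\<sigma>. Sigma (?NN \<sigma>) (\<lambda>n. {..<b C \<sigma> n})))"
    unfolding II_def nn_def dl_def by auto
  have finNN: "finite (?NN \<sigma>)" for \<sigma>
  proof (rule finite_subset[of _ "{..m}"])
    show "?NN \<sigma> \<subseteq> {..m}"
    proof
      fix n assume n: "n \<in> ?NN \<sigma>"
      then have nm: "n * fst \<sigma> = m" by simp
      then have "fst \<sigma> \<ge> 1" using m by (cases "fst \<sigma>") auto
      then have "n * 1 \<le> n * fst \<sigma>" by (rule mult_le_mono2)
      then show "n \<in> {..m}" using nm by simp
    qed
  qed simp
  have finIm: "finite ?Im" unfolding Im using finite_CC finite_Sigma finNN by (auto intro!: finite_SigmaI)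
  have finPer: "finite (Per Ta PP m)" unfolding Per_Ta[OF m]
    using finIm finite_rcosets by (auto intro!: finite_SigmaI)
  have cardPer: "card (Per Ta PP m) = m * (\<Sum>i\<in>?Im. th i)"
  proof -
    have "card (Per Ta PP m) = (\<Sum>i\<in>?Im. card ((rcosets (HH i)) \<times> {..<nn i}))"
      unfolding Per_Ta[OF m] using finIm finite_rcosets by (simp add: card_SigmaI)
    also have "\<dots> = (\<Sum>i\<in>?Im. m * th i)"
    proof (rule sum.cong)
      fix i assume i: "i \<in> ?Im"
      have "card (rcosets (HH i)) = th i * dl i" using II_good(4) i unfolding subgroup_index_def by auto
      then have "card ((rcosets (HH i)) \<times> {..<nn i}) = th i * (nn i * dl i)"
        by (simp add: card_cartesian_product mult.commute mult.left_commute)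
      then show "card ((rcosets (HH i)) \<times> {..<nn i}) = m * th i" using i by simp
    qed simp
    finally show ?thesis by (simp add: sum_distrib_left)
  qed
  have cl: "finite (closed_orbits Ta PP m) \<and> m * card (closed_orbits Ta PP m) = card (Per Ta PP m)"
    using card_closed_orbits[OF Ta_PP _ finPer] m by simp
  then have c1: "card (closed_orbits Ta PP m) = (\<Sum>i\<in>?Im. th i)" using cardPer m by simp
  have "(\<Sum>i\<in>?Im. th i) = (\<Sum>C\<in>CC. \<Sum>\<sigma>\<in>Sigma_class G C. \<Sum>n\<in>?NN \<sigma>. \<Sum>j<b C \<sigma> n. snd \<sigma>)"
    unfolding Im by (subst sum_4) (use finite_CC finite_Sigma finNN in \<open>auto simp: th_def\<close>)
  also have "\<dots> = (\<Sum>C\<in>CC. \<Sum>\<sigma>\<in>Sigma_class G C.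
         (if fst \<sigma> dvd m then snd \<sigma> * b C \<sigma> (m div fst \<sigma>) else 0))"
  proof (intro sum.cong refl)
    fix C \<sigma> assume C: "C \<in> CC" and s: "\<sigma> \<in> Sigma_class G C"
    have p: "fst \<sigma> \<ge> 1" using sigma_pos[OF C s] .
    show "(\<Sum>n\<in>?NN \<sigma>. \<Sum>j<b C \<sigma> n. snd \<sigma>) = (if fst \<sigma> dvd m then snd \<sigma> * b C \<sigma> (m div fst \<sigma>) else 0)"
    proof (cases "fst \<sigma> dvd m")
      case True
      then obtain t where t: "m = fst \<sigma> * t" by auto
      have "?NN \<sigma> = {t}" using t p m by (auto simp: mult.commute)
      then show ?thesis using True t p by simp
    next
      case False
      have e: "?NN \<sigma> = {}" using False by auto
      show ?thesis using False by (subst e) simp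
    qed
  qed
  finally show ?thesis using c1 cl by simp
qed

definition JJ where "JJ = Sigma II (\<lambda>i. {..<nn i})"
definition Qa where "Qa = (\<lambda>(i,k). (i, Suc k mod nn i))"

lemma Qa_JJ: "Qa ` JJ \<subseteq> JJ"
  unfolding Qa_def JJ_def using II_good(6) by auto

lemma Qa_pow: "(i,k) \<in> JJ \<Longrightarrow> (Qa^^p) (i,k) = (i, (k+p) mod nn i)"
proof (induction p)
  case 0 then show ?case unfolding JJ_def by simp
next
  case (Suc p) then show ?case unfolding Qa_def by (simp add: mod_Suc_eq)
qed

lemma Per_Qa:
  assumes m: "m \<ge> 1"
  shows "Per Qa JJ m = Sigma {i\<in>II. nn i = m} (\<lambda>i. {..<nn i})"
proof (rule Set.set_eqI)
  fix x
  show "x \<in> Per Qa JJ m \<longleftrightarrow> x \<in> Sigma {i\<in>II. nn i = m} (\<lambda>i. {..<nn i})"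
  proof (cases "x \<in> JJ")
    case True
    then obtain i k where x: "x = (i,k)" "i \<in> II" "k < nn i" unfolding JJ_def by auto
    have "(Qa^^p) x = x \<longleftrightarrow> nn i dvd p" for p
      using Qa_pow[OF True[unfolded x(1)]] x mod_eq_dvd_iff_nat[of k "k+p" "nn i"] by auto
    then have "(\<forall>p. (Qa^^p) x = x \<longleftrightarrow> m dvd p) \<longleftrightarrow> nn i = m"
      using dvd_all_iff[of "nn i" m] by simp
    then show ?thesis using True x unfolding Per_def JJ_def by auto
  next
    case False then show ?thesis unfolding Per_def JJ_def by auto
  qed
qed

lemma card_closed_Qa:
  assumes m: "m \<ge> 1"
  shows "finite (closed_orbits Qa JJ m) \<and>
    card (closed_orbits Qa JJ m) = (\<Sum>C\<in>CC. \<Sum>\<sigma>\<in>Sigma_class G C. b C \<sigma> m)"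
proof -
  let ?Im = "{i\<in>II. nn i = m}"
  have Im: "?Im = Sigma CC (\<lambda>C. Sigma (Sigma_class G C) (\<lambda>\<sigma>. Sigma {m} (\<lambda>n. {..<b C \<sigma> n})))"
    unfolding II_def nn_def using m by auto
  have finIm: "finite ?Im" unfolding Im using finite_CC finite_Sigma by (auto intro!: finite_SigmaI)
  have finPer: "finite (Per Qa JJ m)" unfolding Per_Qa[OF m] using finIm by (auto intro!: finite_SigmaI)
  have cardPer: "card (Per Qa JJ m) = m * card ?Im"
    unfolding Per_Qa[OF m] using finIm by (simp add: card_SigmaI)
  have cl: "finite (closed_orbits Qa JJ m) \<and> m * card (closed_orbits Qa JJ m) = card (Per Qa JJ m)"
    using card_closed_orbits[OF Qa_JJ _ finPer] m by simp
  have "card ?Im = (\<Sum>C\<in>CC. \<Sum>\<sigma>\<in>Sigma_class G C. b C \<sigma> m)"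
    unfolding Im using finite_CC finite_Sigma by (simp add: card_SigmaI finite_SigmaI)
  then show ?thesis using cl cardPer m by simp
qed

end

context prop10 begin

definition iinf where "iinf = (subgroup_conj_class G (carrier G), (1::nat,1::nat), 1::nat, 0::nat)"
definition pinf where "pinf = (iinf, carrier G, 0::nat)"

lemma carrier_class: "subgroup_conj_class G (carrier G) = {carrier G}"
proof -
  have "g <# carrier G #> inv g = carrier G" if "g \<in> carrier G" for g
    using that coset_join3[OF that subgroup_self] coset_join2[OF _ subgroup_self] by simp
  then show ?thesis unfolding subgroup_conj_class_def by auto
qed

lemma rcosets_carrier: "rcosets (carrier G) = {carrier G}"
  unfolding RCOSETS_def using coset_join2[OF _ subgroup_self] by auto

lemma iinf_II: "iinf \<in> II"
proof -
  have C: "subgroup_conj_class G (carrier G) \<in> CC"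
    unfolding conj_classes_subgroups_def using subgroup_self by auto
  let ?N = "G\<lparr>carrier := normalizer G (carrier G)\<rparr>"
  interpret nH: normal "carrier G" ?N using subgroup_in_normalizer[OF subgroup_self] .
  interpret Q: group "?N Mod carrier G" using nH.factorgroup_is_group .
  have o: "Q.ord \<one>\<^bsub>?N Mod carrier G\<^esub> = 1" by (rule Q.ord_id)
  have "1 \<in> elem_orders (?N Mod carrier G)" unfolding elem_orders_def
    using Q.one_closed o[symmetric] by blast
  moreover have "subgroup_index G (carrier G) = 1"
    unfolding subgroup_index_def rcosets_carrier by simp
  ultimately have "(1::nat,1::nat) = (1, subgroup_index G (carrier G) div 1) \<and> carrier G \<in> {carrier G} \<and>
      1 \<in> elem_orders ((G\<lparr>carrier := normalizer G (carrier G)\<rparr>) Mod (carrier G))" by simp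
  then have "(1::nat,1::nat) \<in> Sigma_class G (subgroup_conj_class G (carrier G))"
    unfolding Sigma_class_def carrier_class by blast
  then show ?thesis unfolding iinf_def II_def using C b1 by auto
qed

lemma HH_iinf: "HH iinf = carrier G"
proof -
  have g: "good (subgroup_conj_class G (carrier G)) (1,1) (hc (subgroup_conj_class G (carrier G)) (1,1))"
    using iinf_II sigma_good unfolding iinf_def II_def by auto
  then have "fst (hc (subgroup_conj_class G (carrier G)) (1,1)) \<in> {carrier G}"
    unfolding good_def carrier_class by blast
  then show ?thesis unfolding HH_def iinf_def by simp
qed

lemma nn_iinf: "nn iinf = 1" unfolding nn_def iinf_def by simp

lemma pinf_PP: "pinf \<in> PP"
proof -
  have "carrier G \<in> rcosets (HH iinf)" using HH_iinf rcosets_carrier by simp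
  then show ?thesis unfolding pinf_def PP_def using iinf_II nn_iinf by simp
qed

lemma PP_iinf: "x \<in> PP \<Longrightarrow> fst x = iinf \<Longrightarrow> x = pinf"
proof -
  assume x: "x \<in> PP" and f: "fst x = iinf"
  obtain i S k where x3: "x = (i,S,k)" by (cases x) auto
  have i: "i = iinf" using f x3 by simp
  have "S \<in> rcosets (HH iinf)" "k < nn iinf" using x x3 i unfolding PP_def by auto
  then have "S = carrier G" "k = 0" using HH_iinf rcosets_carrier nn_iinf by auto
  then show "x = pinf" unfolding pinf_def using x3 i by simp
qed

lemma countable_times: "countable A \<Longrightarrow> countable B \<Longrightarrow> countable (A \<times> B)"
  by (rule countable_SIGMA)

lemma PP_sub: "x \<in> PP \<Longrightarrow> x \<in> (Pow (Pow (carrier G)) \<times> (UNIV :: (nat \<times> nat) set) \<times> (UNIV :: nat set) \<times> (UNIV :: nat set))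
      \<times> (Pow (carrier G) \<times> (UNIV :: nat set))"
proof -
  assume x: "x \<in> PP"
  obtain i S k where x3: "x = (i,S,k)" by (cases x) auto
  obtain C \<sigma> n j where i4: "i = (C,\<sigma>,n,j)" by (cases i) auto
  have iI: "i \<in> II" and Sr: "S \<in> rcosets (HH i)" using x x3 unfolding PP_def by auto
  have C: "C \<in> CC" using iI i4 unfolding II_def by auto
  have "C \<subseteq> Pow (carrier G)" using conj_class_mem_subgroup[OF C] subgroup.subset by blast
  moreover have "S \<subseteq> carrier G" using rcosets_sub[OF II_good(1)[OF iI] Sr] .
  ultimately show ?thesis using x3 i4 by simp
qed

lemma countable_PP: "countable PP"
proof (rule countable_subset)
  show "PP \<subseteq> (Pow (Pow (carrier G)) \<times> (UNIV :: (nat \<times> nat) set) \<times> (UNIV :: nat set) \<times> (UNIV :: nat set))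
      \<times> (Pow (carrier G) \<times> (UNIV :: nat set))" using PP_sub by blast
  have c1: "countable (Pow (Pow (carrier G)))" using fin by (intro countable_finite) simp
  have c2: "countable (Pow (carrier G))" using fin by (intro countable_finite) simp
  have u1: "countable (UNIV :: (nat \<times> nat) set)" by (rule countableI_type)
  have u2: "countable (UNIV :: nat set)" by (rule countableI_type)
  show "countable ((Pow (Pow (carrier G)) \<times> (UNIV :: (nat \<times> nat) set) \<times> (UNIV :: nat set) \<times> (UNIV :: nat set))
      \<times> (Pow (carrier G) \<times> (UNIV :: nat set)))"
    by (intro countable_times c1 c2 u1 u2)
qed

definition ee :: "('g set set \<times> (nat \<times> nat) \<times> nat \<times> nat) \<times> 'g set \<times> nat \<Rightarrow> real" where
  "ee x = real (to_nat_on PP x)"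

lemma inj_ee: "inj_on ee PP"
  using inj_on_to_nat_on[OF countable_PP] unfolding ee_def inj_on_def by simp

definition XX where "XX = ee ` PP"
definition dec where "dec = inv_into PP ee"

lemma dec_ee: "p \<in> PP \<Longrightarrow> dec (ee p) = p"
  unfolding dec_def using inj_ee by (simp add: inv_into_f_f)

lemma ee_dec: "x \<in> XX \<Longrightarrow> ee (dec x) = x"
  unfolding dec_def XX_def by (simp add: f_inv_into_f)

lemma dec_in: "x \<in> XX \<Longrightarrow> dec x \<in> PP"
  unfolding dec_def XX_def by (auto simp: inv_into_into)

lemma bij_ee: "bij_betw ee PP XX"
  unfolding XX_def using inj_ee by (simp add: bij_betw_def)

definition TT where "TT x = ee (Ta (dec x))"
definition phi where "phi g x = (if x \<in> XX then ee (phia g (dec x)) else undefined)"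
definition wa where "wa p = (if fst p = iinf then 0 else 1 / (real (nn (fst p)) + 1))"
definition ww where "ww x = wa (dec x)"
definition dd where "dd = (\<lambda>x y. if x = y then 0 else max (ww x) (ww y))"

lemma TT_ee: "p \<in> PP \<Longrightarrow> TT (ee p) = ee (Ta p)"
  unfolding TT_def using dec_ee by simp

lemma wa_nonneg: "wa p \<ge> 0" unfolding wa_def by simp

lemma wa_Ta: "wa (Ta p) = wa p"
  unfolding wa_def Ta_def by (auto split: prod.splits)

lemma wa_phia: "wa (phia g p) = wa p"
  unfolding wa_def phia_def by (auto split: prod.splits)

lemma TT_in: "x \<in> XX \<Longrightarrow> TT x \<in> XX"
  unfolding TT_def XX_def using dec_in Ta_in XX_def by auto

lemma ww_TT: "x \<in> XX \<Longrightarrow> ww (TT x) = ww x"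
  unfolding ww_def TT_def using dec_ee[OF Ta_in[OF dec_in]] wa_Ta by simp

lemma metric: "Metric_space XX dd"
  unfolding dd_def
proof (rule wmetric)
  show "\<And>x. ww x \<ge> 0" unfolding ww_def by (rule wa_nonneg)
  fix x y assume xy: "x \<in> XX" "y \<in> XX" "ww x = 0" "ww y = 0"
  have "fst (dec x) = iinf" using xy(3) unfolding ww_def wa_def
    by (auto split: if_splits)
  moreover have "fst (dec y) = iinf" using xy(4) unfolding ww_def wa_def
    by (auto split: if_splits)
  ultimately have "dec x = dec y" using PP_iinf dec_in xy(1,2) by metis
  then show "x = y" using ee_dec xy(1,2) by metis
qed

lemma finite_wa: "e > 0 \<Longrightarrow> finite {x\<in>XX. ww x \<ge> e}"
proof -
  assume e: "e > 0"
  define N where "N = nat \<lceil>1/e\<rceil>"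
  let ?B = "Sigma (Sigma CC (\<lambda>C. Sigma (Sigma_class G C) (\<lambda>\<sigma>. Sigma {..N} (\<lambda>n. {..<b C \<sigma> n}))))
            (\<lambda>i. (rcosets (HH i)) \<times> {..<nn i})"
  have finB: "finite ?B"
    by (intro finite_SigmaI finite_CC finite_Sigma finite_rcosets finite_atMost finite_lessThan)
  have "{p\<in>PP. wa p \<ge> e} \<subseteq> ?B"
  proof
    fix p assume p: "p \<in> {p\<in>PP. wa p \<ge> e}"
    then have ne: "fst p \<noteq> iinf" and le: "e \<le> 1 / (real (nn (fst p)) + 1)"
      using e unfolding wa_def by (auto split: if_splits)
    have "e * (real (nn (fst p)) + 1) \<le> 1" using le by (simp add: field_simps)
    then have "real (nn (fst p)) + 1 \<le> 1 / e" using e by (simp add: field_simps)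
    moreover have "1/e \<le> real N" unfolding N_def by (rule real_nat_ceiling_ge)
    ultimately have "real (nn (fst p)) \<le> real N" by linarith
    then have "nn (fst p) \<le> N" by simp
    then show "p \<in> ?B" using p unfolding PP_def II_def nn_def by auto
  qed
  then have "finite {p\<in>PP. wa p \<ge> e}" using finB finite_subset by blast
  moreover have "{x\<in>XX. ww x \<ge> e} \<subseteq> ee ` {p\<in>PP. wa p \<ge> e}"
  proof
    fix x assume x: "x \<in> {x\<in>XX. ww x \<ge> e}"
    then have "dec x \<in> {p\<in>PP. wa p \<ge> e}" using dec_in unfolding ww_def by auto
    moreover have "x = ee (dec x)" using ee_dec x by simp
    ultimately show "x \<in> ee ` {p\<in>PP. wa p \<ge> e}" by blast
  qed
  ultimately show ?thesis using finite_subset by blast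
qed

lemma compact: "compact_space (Metric_space.mtopology XX dd)"
proof (rule wcompact[OF metric dd_def])
  show "\<And>x. ww x \<ge> 0" unfolding ww_def by (rule wa_nonneg)
  show "ee pinf \<in> XX" unfolding XX_def using pinf_PP by simp
  show "ww (ee pinf) = 0" unfolding ww_def using dec_ee[OF pinf_PP] by (simp add: wa_def pinf_def)
  show "\<And>e. e > 0 \<Longrightarrow> finite {x\<in>XX. ww x \<ge> e}" using finite_wa by simp
qed

definition per where "per p = nn (fst p) * dl (fst p)"

lemma per_pos: "p \<in> PP \<Longrightarrow> per p \<ge> 1"
  unfolding per_def PP_def using II_good(3,6) by auto

lemma Ta_per: "p \<in> PP \<Longrightarrow> (Ta^^(per p)) p = p"
  using Ta_fix_iff[of "fst p" "fst (snd p)" "snd (snd p)" "per p"] unfolding per_def by simp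

lemma per_Ta: "per (Ta p) = per p"
  unfolding per_def Ta_def by (auto split: prod.splits)

lemma TT_pow: "x \<in> XX \<Longrightarrow> (TT^^k) x = ee ((Ta^^k) (dec x))"
  using funpow_conj[OF Ta_PP, of TT ee "dec x" k] TT_ee dec_in ee_dec by simp

definition TTi where "TTi x = (TT^^(per (dec x) - 1)) x"

lemma TT_pow_in: "x \<in> XX \<Longrightarrow> (TT^^k) x \<in> XX"
  using funpow_in[of TT XX] TT_in by blast

lemma ww_TT_pow: "x \<in> XX \<Longrightarrow> ww ((TT^^k) x) = ww x"
proof (induction k)
  case (Suc k) then show ?case using ww_TT TT_pow_in by simp
qed simp

lemma homeo: "homeomorphic_map (Metric_space.mtopology XX dd) (Metric_space.mtopology XX dd) TT"
  unfolding homeomorphic_map_maps homeomorphic_maps_def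
proof (intro exI conjI ballI)
  show "continuous_map (Metric_space.mtopology XX dd) (Metric_space.mtopology XX dd) TT"
  proof (rule wcont[OF metric dd_def])
    fix x assume "x \<in> XX"
    then show "TT x \<in> XX" "ww (TT x) = ww x" by (rule TT_in, rule ww_TT)
  qed
  show "continuous_map (Metric_space.mtopology XX dd) (Metric_space.mtopology XX dd) TTi"
  proof (rule wcont[OF metric dd_def])
    fix x assume "x \<in> XX"
    then show "TTi x \<in> XX" "ww (TTi x) = ww x" unfolding TTi_def by (rule TT_pow_in, rule ww_TT_pow)
  qed
  fix x assume "x \<in> topspace (Metric_space.mtopology XX dd)"
  then have x: "x \<in> XX" using Metric_space.topspace_mtopology[OF metric] by simp
  have p: "dec x \<in> PP" using dec_in[OF x] .
  obtain q where q: "per (dec x) = Suc q" using per_pos[OF p] by (cases "per (dec x)") auto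
  have full: "(TT^^(Suc q)) x = x" using TT_pow[OF x, of "Suc q"] Ta_per[OF p] ee_dec[OF x] q
    by (simp del: funpow.simps)
  have "TTi (TT x) = (TT^^q) (TT x)"
    unfolding TTi_def TT_def using dec_ee[OF Ta_in[OF p]] per_Ta q by simp
  also have "\<dots> = (TT^^(Suc q)) x" by (simp add: funpow_Suc_right del: funpow.simps)
  finally show "TTi (TT x) = x" using full by simp
  have "TT (TTi x) = (TT^^(Suc q)) x" unfolding TTi_def using q by simp
  then show "TT (TTi x) = x" using full by simp
qed

end

context prop10 begin

lemma phia_in: "g \<in> carrier G \<Longrightarrow> p \<in> PP \<Longrightarrow> phia g p \<in> PP"
proof -
  assume g: "g \<in> carrier G" and p: "p \<in> PP"
  then obtain i S k where x: "p = (i,S,k)" "i \<in> II" "S \<in> rcosets (HH i)" "k < nn i"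
    unfolding PP_def by auto
  obtain a where a: "a \<in> carrier G" "S = HH i #> a" using x(3) unfolding RCOSETS_def by auto
  have "S #> inv g = HH i #> (a \<otimes> inv g)"
    using coset_mult_assoc II_good(8)[OF x(2)] a g by simp
  then have "S #> inv g \<in> rcosets (HH i)" using rcosetsI II_good(8)[OF x(2)] a g by simp
  then show ?thesis using x unfolding PP_def phia_def by auto
qed

lemma phia_mult: "g \<in> carrier G \<Longrightarrow> h \<in> carrier G \<Longrightarrow> p \<in> PP \<Longrightarrow> phia (g \<otimes> h) p = phia g (phia h p)"
proof -
  assume g: "g \<in> carrier G" and h: "h \<in> carrier G" and p: "p \<in> PP"
  then obtain i S k where x: "p = (i,S,k)" "i \<in> II" "S \<in> rcosets (HH i)"
    unfolding PP_def by auto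
  have S: "S \<subseteq> carrier G" using rcosets_sub[OF II_good(1)[OF x(2)] x(3)] .
  have "S #> inv (g \<otimes> h) = S #> inv h #> inv g"
    using coset_mult_assoc[OF S] g h by (simp add: inv_mult_group)
  then show ?thesis using x unfolding phia_def by simp
qed

lemma phia_one: "p \<in> PP \<Longrightarrow> phia \<one> p = p"
proof -
  assume p: "p \<in> PP"
  then obtain i S k where x: "p = (i,S,k)" "i \<in> II" "S \<in> rcosets (HH i)"
    unfolding PP_def by auto
  have S: "S \<subseteq> carrier G" using rcosets_sub[OF II_good(1)[OF x(2)] x(3)] .
  then show ?thesis using x unfolding phia_def by simp
qed

lemma phia_Ta: "g \<in> carrier G \<Longrightarrow> p \<in> PP \<Longrightarrow> phia g (Ta p) = Ta (phia g p)"
proof -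
  assume g: "g \<in> carrier G" and p: "p \<in> PP"
  then obtain i S k where x: "p = (i,S,k)" "i \<in> II" "S \<in> rcosets (HH i)"
    unfolding PP_def by auto
  have S: "S \<subseteq> carrier G" using rcosets_sub[OF II_good(1)[OF x(2)] x(3)] .
  have "cc i <# (S #> inv g) = (cc i <# S) #> inv g"
    using coset_assoc II_good(7)[OF x(2)] g S by simp
  then show ?thesis using x unfolding phia_def Ta_def by simp
qed

lemma phi_ee: "p \<in> PP \<Longrightarrow> phi g (ee p) = ee (phia g p)"
  unfolding phi_def XX_def using dec_ee by simp

lemma phi_XX: "x \<in> XX \<Longrightarrow> phi g x = ee (phia g (dec x))"
  unfolding phi_def by simp

lemma phi_in: "g \<in> carrier G \<Longrightarrow> x \<in> XX \<Longrightarrow> phi g x \<in> XX"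
  unfolding phi_def XX_def using dec_in phia_in XX_def by auto

lemma phi_Bij: "g \<in> carrier G \<Longrightarrow> phi g \<in> Bij XX"
proof -
  assume g: "g \<in> carrier G"
  have ext: "phi g \<in> extensional XX" unfolding phi_def extensional_def by simp
  have inv1: "phi (inv g) (phi g x) = x" if "x \<in> XX" for x
  proof -
    have p: "dec x \<in> PP" using dec_in[OF that] .
    have "phi (inv g) (phi g x) = ee (phia (inv g) (phia g (dec x)))"
      using phi_ee[OF phia_in[OF g p]] phi_XX[OF that] by simp
    also have "\<dots> = ee (phia (inv g \<otimes> g) (dec x))" using phia_mult[of "inv g" g "dec x"] g p by simp
    also have "\<dots> = x" using phia_one[OF p] g ee_dec[OF that] by simp
    finally show ?thesis .
  qed
  have inv2: "phi g (phi (inv g) x) = x" if "x \<in> XX" for x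
  proof -
    have p: "dec x \<in> PP" using dec_in[OF that] .
    have ig: "inv g \<in> carrier G" using g by simp
    have "phi g (phi (inv g) x) = ee (phia g (phia (inv g) (dec x)))"
      using phi_ee[OF phia_in[OF ig p]] phi_XX[OF that] by simp
    also have "\<dots> = ee (phia (g \<otimes> inv g) (dec x))" using phia_mult[of g "inv g" "dec x"] g p by simp
    also have "\<dots> = x" using phia_one[OF p] g ee_dec[OF that] by simp
    finally show ?thesis .
  qed
  have "bij_betw (phi g) XX XX"
  proof (rule bij_betw_byWitness[where f'="phi (inv g)"])
    show "\<forall>a\<in>XX. phi (inv g) (phi g a) = a" using inv1 by blast
    show "\<forall>a'\<in>XX. phi g (phi (inv g) a') = a'" using inv2 by blast
    show "phi g ` XX \<subseteq> XX" using phi_in[OF g] by blast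
    show "phi (inv g) ` XX \<subseteq> XX" using phi_in[of "inv g"] g by blast
  qed
  then show ?thesis using ext unfolding Bij_def by simp
qed

lemma action: "group_action G XX phi"
  unfolding group_action_def group_hom_def group_hom_axioms_def
proof (intro conjI)
  show "group G" by (rule is_group)
  show "group (BijGroup XX)" by (rule group_BijGroup)
  show "phi \<in> hom G (BijGroup XX)"
    unfolding hom_def
  proof (intro CollectI conjI ballI)
    show "phi \<in> carrier G \<rightarrow> carrier (BijGroup XX)" using phi_Bij unfolding BijGroup_def by auto
    fix g h assume g: "g \<in> carrier G" and h: "h \<in> carrier G"
    have "phi (g \<otimes> h) = compose XX (phi g) (phi h)"
    proof
      fix x show "phi (g \<otimes> h) x = compose XX (phi g) (phi h) x"
      proof (cases "x \<in> XX")
        case True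
        have p: "dec x \<in> PP" using dec_in[OF True] .
        have "phi g (phi h x) = ee (phia g (phia h (dec x)))"
          using phi_ee[OF phia_in[OF h p]] phi_XX[OF True] by simp
        moreover have "phi (g \<otimes> h) x = ee (phia g (phia h (dec x)))"
          using phi_XX[OF True] phia_mult[OF g h p] by simp
        ultimately show ?thesis using True unfolding compose_def by simp
      qed (simp add: phi_def compose_def)
    qed
    then show "phi (g \<otimes> h) = phi g \<otimes>\<^bsub>BijGroup XX\<^esub> phi h"
      using phi_Bij g h unfolding BijGroup_def by simp
  qed
qed

lemma phi_TT: "g \<in> carrier G \<Longrightarrow> x \<in> XX \<Longrightarrow> phi g (TT x) = TT (phi g x)"
proof -
  assume g: "g \<in> carrier G" and x: "x \<in> XX"
  have p: "dec x \<in> PP" using dec_in[OF x] .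
  have "phi g (TT x) = ee (phia g (Ta (dec x)))" unfolding TT_def using phi_ee Ta_in[OF p] by simp
  also have "\<dots> = ee (Ta (phia g (dec x)))" using phia_Ta[OF g p] by simp
  also have "\<dots> = TT (phi g x)" unfolding phi_def TT_def using x dec_ee[OF phia_in[OF g p]] by simp
  finally show ?thesis .
qed

lemma phi_cont: "g \<in> carrier G \<Longrightarrow> continuous_map (Metric_space.mtopology XX dd) (Metric_space.mtopology XX dd) (phi g)"
proof -
  assume g: "g \<in> carrier G"
  show ?thesis
  proof (rule wcont[OF metric dd_def])
    fix x assume x: "x \<in> XX"
    show "phi g x \<in> XX" by (rule phi_in[OF g x])
    show "ww (phi g x) = ww x"
      unfolding ww_def phi_def using x dec_ee[OF phia_in[OF g dec_in[OF x]]] wa_phia by simp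
  qed
qed

lemma card_closed_TT:
  assumes m: "m \<ge> 1"
  shows "finite (closed_orbits TT XX m) \<and>
    card (closed_orbits TT XX m) = (\<Sum>C\<in>CC. \<Sum>\<sigma>\<in>Sigma_class G C.
         (if fst \<sigma> dvd m then snd \<sigma> * b C \<sigma> (m div fst \<sigma>) else 0))"
  using card_closed_orbits_conj[OF bij_ee Ta_PP TT_ee conjunct1[OF card_closed_Ta[OF m]]] card_closed_Ta[OF m]
  by simp

end

context prop10 begin

definition OM where "OM = (\<lambda>(i,k). ee ` ((\<lambda>S. (i,S,k)) ` (rcosets (HH i))))"

lemma rc_orbit:
  assumes H: "subgroup H G" and S: "S \<in> rcosets H"
  shows "(\<lambda>g. S #> inv g) ` carrier G = rcosets H"
proof -
  have HG: "H \<subseteq> carrier G" using subgroup.subset[OF H] .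
  obtain a where a: "a \<in> carrier G" "S = H #> a" using S unfolding RCOSETS_def by auto
  show ?thesis
  proof
    show "(\<lambda>g. S #> inv g) ` carrier G \<subseteq> rcosets H"
    proof
      fix T assume "T \<in> (\<lambda>g. S #> inv g) ` carrier G"
      then obtain g where g: "g \<in> carrier G" "T = S #> inv g" by auto
      then have "T = H #> (a \<otimes> inv g)" using coset_mult_assoc[OF HG] a by simp
      then show "T \<in> rcosets H" using rcosetsI[OF HG] a g by simp
    qed
    show "rcosets H \<subseteq> (\<lambda>g. S #> inv g) ` carrier G"
    proof
      fix T assume "T \<in> rcosets H"
      then obtain t where t: "t \<in> carrier G" "T = H #> t" unfolding RCOSETS_def by auto
      have g: "inv t \<otimes> a \<in> carrier G" using t a by simp
      have "inv (inv t \<otimes> a) = inv a \<otimes> t" using t a by (simp add: inv_mult_group)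
      then have "S #> inv (inv t \<otimes> a) = H #> (a \<otimes> (inv a \<otimes> t))"
        using coset_mult_assoc[OF HG] a t by simp
      also have "a \<otimes> (inv a \<otimes> t) = t" using a t by (simp add: m_assoc[symmetric])
      finally show "T \<in> (\<lambda>g. S #> inv g) ` carrier G" using g t by force
    qed
  qed
qed

lemma orbit_ee:
  assumes p: "(i,S,k) \<in> PP"
  shows "orbit G phi (ee (i,S,k)) = OM (i,k)"
proof -
  have i: "i \<in> II" and Sr: "S \<in> rcosets (HH i)" using p unfolding PP_def by auto
  have "orbit G phi (ee (i,S,k)) = (\<lambda>g. ee (i, S #> inv g, k)) ` carrier G"
    unfolding orbit_def using phi_ee[OF p] by (auto simp: phia_def)
  also have "\<dots> = ee ` ((\<lambda>S. (i,S,k)) ` ((\<lambda>g. S #> inv g) ` carrier G))" by (simp add: image_image)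
  also have "\<dots> = OM (i,k)" unfolding OM_def using rc_orbit[OF II_good(1)[OF i] Sr] by simp
  finally show ?thesis .
qed

lemma HH_PP: "(i,k) \<in> JJ \<Longrightarrow> (i, HH i, k) \<in> PP"
proof -
  assume "(i,k) \<in> JJ"
  then have i: "i \<in> II" and k: "k < nn i" unfolding JJ_def by auto
  have "HH i #> \<one> = HH i" using II_good(8)[OF i] by simp
  then have "HH i \<in> rcosets (HH i)" using rcosetsI[OF II_good(8)[OF i], of \<one>] by simp
  then show ?thesis using i k unfolding PP_def by simp
qed

lemma orbits_eq: "orbits G XX phi = OM ` JJ"
proof
  show "orbits G XX phi \<subseteq> OM ` JJ"
  proof
    fix Ob assume "Ob \<in> orbits G XX phi"
    then obtain x where x: "x \<in> XX" "Ob = orbit G phi x" unfolding orbits_def by auto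
    obtain i S k where d: "dec x = (i,S,k)" by (cases "dec x") auto
    have p: "(i,S,k) \<in> PP" using dec_in[OF x(1)] d by simp
    have "Ob = OM (i,k)" using orbit_ee[OF p] x ee_dec[OF x(1)] d by simp
    moreover have "(i,k) \<in> JJ" using p unfolding PP_def JJ_def by auto
    ultimately show "Ob \<in> OM ` JJ" by blast
  qed
  show "OM ` JJ \<subseteq> orbits G XX phi"
  proof
    fix Ob assume "Ob \<in> OM ` JJ"
    then obtain i k where j: "(i,k) \<in> JJ" "Ob = OM (i,k)" by auto
    have "Ob = orbit G phi (ee (i, HH i, k))" using orbit_ee[OF HH_PP[OF j(1)]] j by simp
    moreover have "ee (i, HH i, k) \<in> XX" unfolding XX_def using HH_PP[OF j(1)] by simp
    ultimately show "Ob \<in> orbits G XX phi" unfolding orbits_def by auto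
  qed
qed

lemma inj_OM: "inj_on OM JJ"
proof (rule inj_onI)
  fix j j' assume j: "j \<in> JJ" "j' \<in> JJ" "OM j = OM j'"
  obtain i k where ik: "j = (i,k)" by (cases j) auto
  obtain i' k' where ik': "j' = (i',k')" by (cases j') auto
  have "ee (i, HH i, k) \<in> OM j"
    unfolding ik OM_def using HH_PP[OF j(1)[unfolded ik]] unfolding PP_def by auto
  then have "ee (i, HH i, k) \<in> OM (i',k')" using j(3) ik' by simp
  then obtain S' where S': "S' \<in> rcosets (HH i')" "ee (i, HH i, k) = ee (i', S', k')"
    unfolding OM_def by auto
  have mem: "(i', S', k') \<in> PP" using j(2) S'(1) ik' unfolding JJ_def PP_def by auto
  have "(i, HH i, k) = (i', S', k')"
    by (rule inj_onD[OF inj_ee S'(2) HH_PP[OF j(1)[unfolded ik]] mem])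
  then show "j = j'" using ik ik' by simp
qed

lemma bij_OM: "bij_betw OM JJ (orbits G XX phi)"
  using inj_OM orbits_eq by (simp add: bij_betw_def)

lemma Ta_form: "(i,S,k) \<in> PP \<Longrightarrow> \<exists>S'. Ta (i,S,k) = (i,S',Suc k mod nn i)"
proof -
  assume "(i,S,k) \<in> PP"
  then have k: "k < nn i" unfolding PP_def by auto
  show ?thesis
  proof (cases "Suc k < nn i")
    case True then show ?thesis unfolding Ta_def by simp
  next
    case False then have "Suc k = nn i" using k by simp
    then show ?thesis unfolding Ta_def by simp
  qed
qed

lemma qm: "j \<in> JJ \<Longrightarrow> quotient_map G phi TT (OM j) = OM (Qa j)"
proof -
  assume j: "j \<in> JJ"
  obtain i k where ik: "j = (i,k)" by (cases j) auto
  have ne: "ee (i, HH i, k) \<in> OM j"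
    unfolding ik OM_def using HH_PP[OF j[unfolded ik]] unfolding PP_def by auto
  define x where "x = (SOME x. x \<in> OM j)"
  have "x \<in> OM j" unfolding x_def using ne by (rule someI)
  then obtain S where S: "S \<in> rcosets (HH i)" "x = ee (i,S,k)" unfolding ik OM_def by auto
  have p: "(i,S,k) \<in> PP" using j S(1) ik unfolding JJ_def PP_def by auto
  obtain S' where S': "Ta (i,S,k) = (i,S',Suc k mod nn i)" using Ta_form[OF p] by blast
  have p': "(i,S',Suc k mod nn i) \<in> PP" using Ta_in[OF p] S' by simp
  have "quotient_map G phi TT (OM j) = orbit G phi (TT x)"
    unfolding quotient_map_def x_def by simp
  also have "TT x = ee (i,S',Suc k mod nn i)" using S(2) TT_ee[OF p] S' by simp
  also have "orbit G phi (ee (i,S',Suc k mod nn i)) = OM (i, Suc k mod nn i)" using orbit_ee[OF p'] .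
  finally show ?thesis using ik unfolding Qa_def by simp
qed

lemma card_closed_quot:
  assumes m: "m \<ge> 1"
  shows "finite (closed_orbits (quotient_map G phi TT) (orbits G XX phi) m) \<and>
    card (closed_orbits (quotient_map G phi TT) (orbits G XX phi) m) = (\<Sum>C\<in>CC. \<Sum>\<sigma>\<in>Sigma_class G C. b C \<sigma> m)"
  using card_closed_orbits_conj[OF bij_OM Qa_JJ qm conjunct1[OF card_closed_Qa[OF m]]] card_closed_Qa[OF m]
  by simp

end

theorem proposition10:
  fixes G :: "('g, 'b) monoid_scheme"
    and b :: "'g set set \<Rightarrow> nat \<times> nat \<Rightarrow> nat \<Rightarrow> nat"
    and a_sig :: "'g set set \<Rightarrow> nat \<times> nat \<Rightarrow> nat \<Rightarrow> nat"
    and a_tot b_tot :: "nat \<Rightarrow> nat"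
  assumes "group G" and "finite (carrier G)"
    and "b (subgroup_conj_class G (carrier G)) (1, 1) 1 \<ge> 1"
    and "\<And>C \<sigma> n. a_sig C \<sigma> n = (if fst \<sigma> dvd n then snd \<sigma> * b C \<sigma> (n div fst \<sigma>) else 0)"
    and "\<And>n. n \<ge> 1 \<Longrightarrow> a_tot n = (\<Sum>C\<in>conj_classes_subgroups G. \<Sum>\<sigma>\<in>Sigma_class G C. a_sig C \<sigma> n)"
    and "\<And>n. n \<ge> 1 \<Longrightarrow> b_tot n = (\<Sum>C\<in>conj_classes_subgroups G. \<Sum>\<sigma>\<in>Sigma_class G C. b C \<sigma> n)"
  shows "\<exists>(X :: real set) (d :: real \<Rightarrow> real \<Rightarrow> real) (T :: real \<Rightarrow> real) (\<phi> :: 'g \<Rightarrow> real \<Rightarrow> real).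
           Metric_space X d \<and>
           compact_space (Metric_space.mtopology X d) \<and>
           homeomorphic_map (Metric_space.mtopology X d) (Metric_space.mtopology X d) T \<and>
           group_action G X \<phi> \<and>
           (\<forall>g\<in>carrier G. continuous_map (Metric_space.mtopology X d) (Metric_space.mtopology X d) (\<phi> g)) \<and>
           (\<forall>g\<in>carrier G. \<forall>x\<in>X. \<phi> g (T x) = T (\<phi> g x)) \<and>
           (\<forall>n\<ge>1. finite (closed_orbits T X n) \<and> card (closed_orbits T X n) = a_tot n) \<and>
           (\<forall>n\<ge>1. finite (closed_orbits (quotient_map G \<phi> T) (orbits G X \<phi>) n) \<and>
                   card (closed_orbits (quotient_map G \<phi> T) (orbits G X \<phi>) n) = b_tot n)"
proof -
  interpret P: prop10 G b
    using prop10.intro[OF assms(1) prop10_axioms.intro[of G b, OF assms(2,3)]] .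
  show ?thesis
  proof (rule exI[of _ P.XX], rule exI[of _ P.dd], rule exI[of _ P.TT], rule exI[of _ P.phi],
      intro conjI ballI allI impI)
    show "Metric_space P.XX P.dd" by (rule P.metric)
    show "compact_space (Metric_space.mtopology P.XX P.dd)" by (rule P.compact)
    show "homeomorphic_map (Metric_space.mtopology P.XX P.dd) (Metric_space.mtopology P.XX P.dd) P.TT"
      by (rule P.homeo)
    show "group_action G P.XX P.phi" by (rule P.action)
    fix g assume "g \<in> carrier G"
    then show "continuous_map (Metric_space.mtopology P.XX P.dd) (Metric_space.mtopology P.XX P.dd) (P.phi g)"
      by (rule P.phi_cont)
  next
    fix g x assume "g \<in> carrier G" "x \<in> P.XX"
    then show "P.phi g (P.TT x) = P.TT (P.phi g x)" by (rule P.phi_TT)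
  next
    fix n :: nat assume n: "n \<ge> 1"
    show "finite (closed_orbits P.TT P.XX n)" using P.card_closed_TT[OF n] by simp
    show "card (closed_orbits P.TT P.XX n) = a_tot n" using P.card_closed_TT[OF n] assms(4) assms(5)[of n] n by simp
  next
    fix n :: nat assume n: "n \<ge> 1"
    show "finite (closed_orbits (quotient_map G P.phi P.TT) (orbits G P.XX P.phi) n)"
      using P.card_closed_quot[OF n] by simp
    show "card (closed_orbits (quotient_map G P.phi P.TT) (orbits G P.XX P.phi) n) = b_tot n"
      using P.card_closed_quot[OF n] assms(6)[of n] n by simp
  qed
qed

end
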